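(* Let $F$ be a signature on a finite set $V$ that is not logsupermodular, but such that every pinning $F_p$ with $\mathrm{dom}(p)\ne\emptyset$ is logsupermodular. Then there is a configuration $x$ such that $\mathrm{supp}(F)\subseteq\{\mathbf 0,x,\overline{x},\mathbf 1\}$.
   Context: A signature on $V$ is a function $F:\{0,1\}^V\to\mathbb{R}_{\ge0}$; $\mathrm{supp}(F)=\{x:F(x)\ne0\}$. $F$ is logsupermodular if $F(x\wedge y)F(x\vee y)\ge F(x)F(y)$ for all $x,y\in\{0,1\}^V$, where $\wedge,\vee$ are coordinatewise min and max. A partial configuration $p$ is an element of $\{0,1\}^{\mathrm{dom}(p)}$, $\mathrm{dom}(p)\subseteq V$, and the pinning $F_p$ on $V\setminus\mathrm{dom}(p)$ is $F_p(x)=F(x,p)$. $\mathbf 0,\mathbf 1$ are the all-zero and all-one configurations; $\overline{x}_i=1-x_i$. *)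

theory Defs
  imports Complex_Main
begin

text \<open>Configurations on a set W of variables: Boolean assignments, normalised to False outside W.\<close>
definition conf :: "'v set \<Rightarrow> ('v \<Rightarrow> bool) set" where
  "conf W = {x. \<forall>v. v \<notin> W \<longrightarrow> \<not> x v}"

definition meet :: "('v \<Rightarrow> bool) \<Rightarrow> ('v \<Rightarrow> bool) \<Rightarrow> ('v \<Rightarrow> bool)" where
  "meet x y = (\<lambda>v. x v \<and> y v)"

definition join :: "('v \<Rightarrow> bool) \<Rightarrow> ('v \<Rightarrow> bool) \<Rightarrow> ('v \<Rightarrow> bool)" where
  "join x y = (\<lambda>v. x v \<or> y v)"

definition signature :: "'v set \<Rightarrow> (('v \<Rightarrow> bool) \<Rightarrow> real) \<Rightarrow> bool" where
  "signature W F \<longleftrightarrow> (\<forall>x\<in>conf W. F x \<ge> 0)"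

definition logsupermodular :: "'v set \<Rightarrow> (('v \<Rightarrow> bool) \<Rightarrow> real) \<Rightarrow> bool" where
  "logsupermodular W F \<longleftrightarrow>
     (\<forall>x\<in>conf W. \<forall>y\<in>conf W. F (meet x y) * F (join x y) \<ge> F x * F y)"

text \<open>Pinning of F by a partial configuration p with domain D (p \<in> conf D);
  the result is a signature on V - D.\<close>
definition pinning :: "(('v \<Rightarrow> bool) \<Rightarrow> real) \<Rightarrow> 'v set \<Rightarrow> ('v \<Rightarrow> bool) \<Rightarrow> (('v \<Rightarrow> bool) \<Rightarrow> real)" where
  "pinning F D p = (\<lambda>x. F (\<lambda>v. if v \<in> D then p v else x v))"

definition supp :: "'v set \<Rightarrow> (('v \<Rightarrow> bool) \<Rightarrow> real) \<Rightarrow> ('v \<Rightarrow> bool) set" where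
  "supp W F = {x \<in> conf W. F x \<noteq> 0}"

definition zero_conf :: "'v \<Rightarrow> bool" where
  "zero_conf = (\<lambda>v. False)"

definition one_conf :: "'v set \<Rightarrow> 'v \<Rightarrow> bool" where
  "one_conf W = (\<lambda>v. v \<in> W)"

definition flip :: "'v set \<Rightarrow> ('v \<Rightarrow> bool) \<Rightarrow> 'v \<Rightarrow> bool" where
  "flip W x = (\<lambda>v. v \<in> W \<and> \<not> x v)"

end

theory Submission
  imports Defs
begin

lemma conf_meet: "a \<in> conf V \<Longrightarrow> b \<in> conf V \<Longrightarrow> meet a b \<in> conf V"
  by (auto simp: conf_def meet_def)
lemma conf_join: "a \<in> conf V \<Longrightarrow> b \<in> conf V \<Longrightarrow> join a b \<in> conf V"
  by (auto simp: conf_def join_def)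
lemma conf_flip: "flip V a \<in> conf V"
  by (auto simp: conf_def flip_def)
lemma conf_zero: "zero_conf \<in> conf V"
  by (auto simp: conf_def zero_conf_def)
lemma conf_one: "one_conf V \<in> conf V"
  by (auto simp: conf_def one_conf_def)

lemma pin_lsm:
  fixes F :: "('v \<Rightarrow> bool) \<Rightarrow> real"
  assumes h4: "\<And>D p. D \<subseteq> V \<Longrightarrow> D \<noteq> {} \<Longrightarrow> p \<in> conf D \<Longrightarrow>
           logsupermodular (V - D) (pinning F D p)"
    and a: "a \<in> conf V" and b: "b \<in> conf V" and v: "v \<in> V" and ab: "a v = b v"
  shows "F a * F b \<le> F (meet a b) * F (join a b)"
proof -
  define p where "p = (\<lambda>w. w = v \<and> a v)"
  have pc: "p \<in> conf {v}" by (auto simp: conf_def p_def)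
  have L: "logsupermodular (V - {v}) (pinning F {v} p)" using h4[of "{v}" p] v pc by auto
  define a' where "a' = a(v:=False)"
  define b' where "b' = b(v:=False)"
  have a': "a' \<in> conf (V - {v})" using a by (auto simp: conf_def a'_def)
  have b': "b' \<in> conf (V - {v})" using b by (auto simp: conf_def b'_def)
  have ea: "pinning F {v} p a' = F a"
  proof -
    have "(\<lambda>w. if w \<in> {v} then p w else a' w) = a" by (rule ext) (auto simp: p_def a'_def)
    thus ?thesis by (simp add: pinning_def)
  qed
  have eb: "pinning F {v} p b' = F b"
  proof -
    have "(\<lambda>w. if w \<in> {v} then p w else b' w) = b" by (rule ext) (auto simp: p_def b'_def ab)
    thus ?thesis by (simp add: pinning_def)
  qed
  have em: "pinning F {v} p (meet a' b') = F (meet a b)"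
  proof -
    have "(\<lambda>w. if w \<in> {v} then p w else meet a' b' w) = meet a b"
      by (rule ext) (auto simp: p_def a'_def b'_def meet_def ab)
    thus ?thesis by (simp add: pinning_def)
  qed
  have ej: "pinning F {v} p (join a' b') = F (join a b)"
  proof -
    have "(\<lambda>w. if w \<in> {v} then p w else join a' b' w) = join a b"
      by (rule ext) (auto simp: p_def a'_def b'_def join_def ab)
    thus ?thesis by (simp add: pinning_def)
  qed
  show ?thesis using L a' b' ea eb em ej unfolding logsupermodular_def by metis
qed

lemma key:
  fixes F :: "('v \<Rightarrow> bool) \<Rightarrow> real"
  assumes nonneg: "\<forall>y\<in>conf V. F y \<ge> 0"
    and lsm: "\<And>a b. a\<in>conf V \<Longrightarrow> b\<in>conf V \<Longrightarrow> (\<exists>v\<in>V. a v = b v) \<Longrightarrow>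
               F a * F b \<le> F (meet a b) * F (join a b)"
    and x: "x \<in> conf V" and viol: "F zero_conf * F (one_conf V) < F x * F (flip V x)"
    and z: "z \<in> conf V" and Fz: "F z \<noteq> 0" and z1: "z \<noteq> flip V x" and z2: "z \<noteq> one_conf V"
    and z3: "\<exists>v\<in>V. z v \<and> \<not> x v"
  shows False
proof -
  define s where "s = meet z x"
  define jz where "jz = join x z"
  define t where "t = meet z (flip V x)"
  have sc: "s \<in> conf V" unfolding s_def using z x by (rule conf_meet)
  have atc: "jz \<in> conf V" unfolding jz_def using x z by (rule conf_join)
  have tc: "t \<in> conf V" unfolding t_def using z conf_flip by (rule conf_meet)
  have n0: "F zero_conf \<ge> 0" using nonneg conf_zero by blast
  have n1: "F (one_conf V) \<ge> 0" using nonneg conf_one by blast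
  have nx: "F x \<ge> 0" using nonneg x by blast
  have nfx: "F (flip V x) \<ge> 0" using nonneg conf_flip by blast
  have ns: "F s \<ge> 0" using nonneg sc by blast
  have njz: "F jz \<ge> 0" using nonneg atc by blast
  have nt: "F t \<ge> 0" using nonneg tc by blast
  have nz: "F z > 0" proof -
    have "F z \<ge> 0" using nonneg z by blast
    thus ?thesis using Fz by linarith
  qed
  have e1: "\<exists>v\<in>V. x v = z v"
  proof (rule ccontr)
    assume "\<not> ?thesis"
    hence "z = flip V x" using z by (auto simp: conf_def flip_def fun_eq_iff)
    thus False using z1 by simp
  qed
  have i1: "F x * F z \<le> F s * F jz"
  proof -
    have "meet x z = s" by (auto simp: s_def meet_def fun_eq_iff)
    thus ?thesis using lsm[OF x z e1] by (simp add: jz_def)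
  qed
  have m2: "meet jz (flip V x) = t" by (auto simp: jz_def t_def meet_def join_def flip_def fun_eq_iff)
  have j2: "join jz (flip V x) = one_conf V"
    using x z by (auto simp: jz_def conf_def one_conf_def join_def flip_def fun_eq_iff)
  have e2: "\<exists>v\<in>V. jz v = flip V x v" using z3 by (auto simp: jz_def join_def flip_def)
  have i2: "F jz * F (flip V x) \<le> F t * F (one_conf V)"
    using lsm[OF atc conf_flip e2] m2 j2 by simp
  have m3: "meet s t = zero_conf" by (auto simp: s_def t_def meet_def flip_def zero_conf_def fun_eq_iff)
  have j3: "join s t = z"
    using z by (auto simp: s_def t_def conf_def meet_def join_def flip_def fun_eq_iff)
  have e3: "\<exists>v\<in>V. s v = t v"
  proof -
    obtain v where "v \<in> V" "\<not> z v"
      using z z2 by (auto simp: conf_def one_conf_def fun_eq_iff)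
    thus ?thesis by (auto simp: s_def t_def meet_def)
  qed
  have i3: "F s * F t \<le> F zero_conf * F z"
    using lsm[OF sc tc e3] m3 j3 by simp
  have pxx: "F x * F (flip V x) > 0" using viol n0 n1
    by (smt (verit) mult_nonneg_nonneg)
  have px: "F x > 0" using pxx nx nfx
    by (metis less_eq_real_def mult_zero_left)
  have "F s * F jz > 0" using i1 px nz by (smt (verit) mult_pos_pos)
  hence pjz: "F jz > 0" using ns njz by (metis less_eq_real_def mult_zero_right)
  have "(F x * F (flip V x)) * (F z * F jz) = (F x * F z) * (F jz * F (flip V x))" by simp
  also have "\<dots> \<le> (F s * F jz) * (F t * F (one_conf V))"
    using i1 i2 by (rule mult_mono) (use nx nz njz nfx ns in auto)
  also have "\<dots> = (F s * F t) * (F jz * F (one_conf V))" by simp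
  also have "\<dots> \<le> (F zero_conf * F z) * (F jz * F (one_conf V))"
    using i3 njz n1 by (simp add: mult_right_mono)
  also have "\<dots> = (F zero_conf * F (one_conf V)) * (F z * F jz)" by simp
  finally have "F x * F (flip V x) \<le> F zero_conf * F (one_conf V)"
    using nz pjz by (simp add: mult_le_cancel_right_pos)
  thus False using viol by simp
qed

theorem mainTheorem8:
  fixes V :: "'v set" and F :: "('v \<Rightarrow> bool) \<Rightarrow> real"
  assumes "finite V"
    and "signature V F"
    and "\<not> logsupermodular V F"
    and "\<And>D p. D \<subseteq> V \<Longrightarrow> D \<noteq> {} \<Longrightarrow> p \<in> conf D \<Longrightarrow>
           logsupermodular (V - D) (pinning F D p)"
  shows "\<exists>x\<in>conf V. supp V F \<subseteq> {zero_conf, x, flip V x, one_conf V}"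
proof -
  have nonneg: "\<forall>y\<in>conf V. F y \<ge> 0" using assms(2) by (simp add: signature_def)
  have lsm: "\<And>a b. a\<in>conf V \<Longrightarrow> b\<in>conf V \<Longrightarrow> (\<exists>v\<in>V. a v = b v) \<Longrightarrow>
               F a * F b \<le> F (meet a b) * F (join a b)"
    using pin_lsm[OF assms(4)] by blast
  obtain a b where a: "a \<in> conf V" and b: "b \<in> conf V"
    and vi: "F (meet a b) * F (join a b) < F a * F b"
    using assms(3) unfolding logsupermodular_def by (auto simp: not_le)
  have "\<not> (\<exists>v\<in>V. a v = b v)" using lsm[OF a b] vi by (meson not_le)
  hence bf: "b = flip V a" using b by (auto simp: conf_def flip_def fun_eq_iff)
  have m: "meet a b = zero_conf" by (auto simp: bf meet_def flip_def zero_conf_def fun_eq_iff)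
  have j: "join a b = one_conf V"
    using a by (auto simp: bf conf_def join_def flip_def one_conf_def fun_eq_iff)
  have viol: "F zero_conf * F (one_conf V) < F a * F (flip V a)" using vi m j bf by simp
  have ffa: "flip V (flip V a) = a" using a by (auto simp: conf_def flip_def fun_eq_iff)
  have viol2: "F zero_conf * F (one_conf V) < F (flip V a) * F (flip V (flip V a))"
    using viol ffa by (metis mult.commute)
  show ?thesis
  proof (intro bexI[OF _ a] subsetI)
    fix z assume zs: "z \<in> supp V F"
    hence z: "z \<in> conf V" and Fz: "F z \<noteq> 0" by (auto simp: supp_def)
    show "z \<in> {zero_conf, a, flip V a, one_conf V}"
    proof (rule ccontr)
      assume nz: "z \<notin> {zero_conf, a, flip V a, one_conf V}"
      show False
      proof (cases "\<exists>v\<in>V. z v \<and> \<not> a v")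
        case True
        have "z \<noteq> flip V a" "z \<noteq> one_conf V" using nz by auto
        thus False using key[OF nonneg lsm a viol z Fz _ _ True] by blast
      next
        case False
        have "\<exists>v\<in>V. z v \<and> \<not> flip V a v"
        proof (rule ccontr)
          assume "\<not> ?thesis"
          with False z have "z = zero_conf" by (auto simp: conf_def flip_def zero_conf_def fun_eq_iff)
          thus False using nz by simp
        qed
        moreover have "z \<noteq> flip V (flip V a)" "z \<noteq> one_conf V" using nz ffa by auto
        ultimately show False using key[OF nonneg lsm conf_flip viol2 z Fz] by blast
      qed
    qed
  qed
qed

end
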